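(* Suppose $(\mu^{(n)}_t,\nu^{(n)}_t)_{t\ge0}$, $n\in\mathbb N$, are processes in $D_{[0,\infty)}(\mathcal M_{\mathrm{tem}}(\mathbb R)^2)$ (resp. $D_{[0,\infty)}(\mathcal M_{\mathrm{rap}}(\mathbb R)^2)$) converging weakly, with respect to the Meyer–Zheng topology, to $(\mu_t,\nu_t)_{t\ge0}$, and suppose that $\mathbb P[R(\mu^{(n)}_t)\le L(\nu^{(n)}_t)\text{ for all }t>0,n\in\mathbb N]=1$. Then $\mathbb P[R(\mu_t)\le L(\nu_t)\text{ for all }t>0]=1$.
   Context: $\phi_\lambda(x)=e^{-\lambda|x|}$. $\mathcal M_{\mathrm{tem}}(\mathbb R)$: nonnegative Radon measures with $\int\phi_\lambda d\mu<\infty$ for all $\lambda>0$, with $\mu_n\to\mu$ iff $\int\varphi d\mu_n\to\int\varphi d\mu$ for every continuous $\varphi$ with, for some $\lambda>0$, $\sup|\varphi|/\phi_\lambda<\infty$ and $\varphi/\phi_\lambda$ having finite limits at $\pm\infty$; $\mathcal M_{\mathrm{rap}}(\mathbb R)$: those with $\int\phi_{-\lambda}d\mu<\infty$ for all $\lambda>0$, with $\mu_n\to\mu$ iff weak convergence and $\sup_n\int\phi_{-\lambda}d\mu_n<\infty$ for all $\lambda>0$. $D_{[0,\infty)}(E)$ is the space of càdlàg paths; the Meyer–Zheng topology on it is induced by weak convergence of pseudo-paths (the images of $e^{-t}dt$ under $t\mapsto(t,w(t))$), equivalently convergence in Lebesgue measure. ${\rm supp}(\mu)=\{x:\mu(B_\varepsilon(x))>0\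 \forall\varepsilon>0\}$, $R(\mu)=\sup{\rm supp}(\mu)$, $L(\mu)=\inf{\rm supp}(\mu)$ in $\bar{\mathbb R}$. *)

theory Defs
  imports "HOL-Probability.Probability"
begin

definition phi :: "real \<Rightarrow> real \<Rightarrow> real" where
  "phi lam x = exp (- lam * \<bar>x\<bar>)"

definition seq_topology :: "'a set \<Rightarrow> ((nat \<Rightarrow> 'a) \<Rightarrow> 'a \<Rightarrow> bool) \<Rightarrow> 'a topology" where
  "seq_topology S conv = topology (\<lambda>U. U \<subseteq> S \<and>
     (\<forall>x\<in>U. \<forall>s. (\<forall>n. s n \<in> S) \<longrightarrow> conv s x \<longrightarrow> eventually (\<lambda>n. s n \<in> U) sequentially))"

definition borel_of :: "'a topology \<Rightarrow> 'a measure" where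
  "borel_of X = sigma (topspace X) {U. openin X U}"

definition radon_measure :: "real measure \<Rightarrow> bool" where
  "radon_measure \<mu> \<longleftrightarrow> sets \<mu> = sets borel \<and> (\<forall>K. compact K \<longrightarrow> emeasure \<mu> K < \<infinity>)"

definition Mtem :: "real measure set" where
  "Mtem = {\<mu>. radon_measure \<mu> \<and> (\<forall>lam>0. (\<integral>\<^sup>+ x. ennreal (phi lam x) \<partial>\<mu>) < \<infinity>)}"

definition Mrap :: "real measure set" where
  "Mrap = {\<mu>. radon_measure \<mu> \<and> (\<forall>lam>0. (\<integral>\<^sup>+ x. ennreal (phi (- lam) x) \<partial>\<mu>) < \<infinity>)}"

definition tem_test :: "(real \<Rightarrow> real) \<Rightarrow> bool" where
  "tem_test f \<longleftrightarrow> continuous_on UNIV f \<and>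
     (\<exists>lam>0. (\<exists>C. \<forall>x. \<bar>f x\<bar> / phi lam x \<le> C) \<and>
              (\<exists>a. ((\<lambda>x. f x / phi lam x) \<longlongrightarrow> a) at_top) \<and>
              (\<exists>b. ((\<lambda>x. f x / phi lam x) \<longlongrightarrow> b) at_bot))"

definition tem_conv :: "(nat \<Rightarrow> real measure) \<Rightarrow> real measure \<Rightarrow> bool" where
  "tem_conv \<mu>s \<mu> \<longleftrightarrow> (\<forall>f. tem_test f \<longrightarrow>
     (\<lambda>n. \<integral>x. f x \<partial>(\<mu>s n)) \<longlonglongrightarrow> (\<integral>x. f x \<partial>\<mu>))"

definition weak_conv_meas :: "(nat \<Rightarrow> real measure) \<Rightarrow> real measure \<Rightarrow> bool" where
  "weak_conv_meas \<mu>s \<mu> \<longleftrightarrow> (\<forall>f::real\<Rightarrow>real. continuous_on UNIV f \<longrightarrow> bounded (range f) \<longrightarrow>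
     (\<lambda>n. \<integral>x. f x \<partial>(\<mu>s n)) \<longlonglongrightarrow> (\<integral>x. f x \<partial>\<mu>))"

definition rap_conv :: "(nat \<Rightarrow> real measure) \<Rightarrow> real measure \<Rightarrow> bool" where
  "rap_conv \<mu>s \<mu> \<longleftrightarrow> weak_conv_meas \<mu>s \<mu> \<and>
     (\<forall>lam>0. \<exists>B. \<forall>n. (\<integral>\<^sup>+ x. ennreal (phi (- lam) x) \<partial>(\<mu>s n)) \<le> B \<and> B < \<infinity>)"

definition tem_topology :: "real measure topology" where
  "tem_topology = seq_topology Mtem tem_conv"

definition rap_topology :: "real measure topology" where
  "rap_topology = seq_topology Mrap rap_conv"

definition cadlag_paths :: "'a topology \<Rightarrow> (real \<Rightarrow> 'a) set" where
  "cadlag_paths E = {w. (\<forall>t\<ge>0. w t \<in> topspace E) \<and> (\<forall>t<0. w t = undefined) \<and>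
      (\<forall>t\<ge>0. limitin E w (w t) (at_right t)) \<and>
      (\<forall>t>0. \<exists>l. limitin E w l (at_left t))}"

text \<open>Weak convergence of pseudo-paths: the pseudo-path of w is the image of
  e^{-t} dt on [0,\<infinity>) under t \<mapsto> (t, w t); its integral against f is written out.\<close>

definition pseudo_path_conv :: "'a topology \<Rightarrow> (nat \<Rightarrow> real \<Rightarrow> 'a) \<Rightarrow> (real \<Rightarrow> 'a) \<Rightarrow> bool" where
  "pseudo_path_conv E ws w \<longleftrightarrow>
     (\<forall>f. continuous_map (prod_topology (top_of_set {0..}) E) euclideanreal f \<longrightarrow>
          (\<exists>C. \<forall>p\<in>topspace (prod_topology (top_of_set {0..}) E). \<bar>f p\<bar> \<le> C) \<longrightarrow>
          (\<lambda>n. LINT t:{0..}|lborel. exp (- t) * f (t, ws n t))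
            \<longlonglongrightarrow> (LINT t:{0..}|lborel. exp (- t) * f (t, w t)))"

definition MZ_topology :: "'a topology \<Rightarrow> (real \<Rightarrow> 'a) topology" where
  "MZ_topology E = seq_topology (cadlag_paths E) (pseudo_path_conv E)"

definition weak_conv_laws :: "'a topology \<Rightarrow> (nat \<Rightarrow> 'a measure) \<Rightarrow> 'a measure \<Rightarrow> bool" where
  "weak_conv_laws X Ps P \<longleftrightarrow>
     (\<forall>f. continuous_map X euclideanreal f \<longrightarrow> (\<exists>C. \<forall>x\<in>topspace X. \<bar>f x\<bar> \<le> C) \<longrightarrow>
          (\<lambda>n. \<integral>x. f x \<partial>(Ps n)) \<longlonglongrightarrow> (\<integral>x. f x \<partial>P))"

definition supp :: "real measure \<Rightarrow> real set" where
  "supp \<mu> = {x. \<forall>e>0. emeasure \<mu> (ball x e) > 0}"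

definition Rsupp :: "real measure \<Rightarrow> ereal" where
  "Rsupp \<mu> = Sup (ereal ` supp \<mu>)"

definition Lsupp :: "real measure \<Rightarrow> ereal" where
  "Lsupp \<mu> = Inf (ereal ` supp \<mu>)"

end

theory Submission
  imports Defs
begin


lemma seq_istop: "istopology (\<lambda>U. U \<subseteq> S \<and>
     (\<forall>x\<in>U. \<forall>s. (\<forall>n. s n \<in> S) \<longrightarrow> conv s x \<longrightarrow> eventually (\<lambda>n. s n \<in> U) sequentially))"
   (is "istopology ?P")
proof -
  have 1: "?P (U \<inter> V)" if "?P U" "?P V" for U V
  proof -
    have "eventually (\<lambda>n. s n \<in> U \<inter> V) sequentially"
      if "x \<in> U \<inter> V" "\<forall>n. s n \<in> S" "conv s x" for x s
    proof -
      have "eventually (\<lambda>n. s n \<in> U) sequentially" "eventually (\<lambda>n. s n \<in> V) sequentially"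
        using \<open>?P U\<close> \<open>?P V\<close> that by auto
      then show ?thesis using eventually_conj by fastforce
    qed
    then show ?thesis using that by blast
  qed
  have 2: "?P (\<Union>K)" if "\<forall>U\<in>K. ?P U" for K
  proof -
    have "eventually (\<lambda>n. s n \<in> \<Union>K) sequentially"
      if xs: "x \<in> \<Union>K" "\<forall>n. s n \<in> S" "conv s x" for x s
    proof -
      obtain U where U: "U \<in> K" "x \<in> U" using xs by auto
      then have "eventually (\<lambda>n. s n \<in> U) sequentially"
        using \<open>\<forall>U\<in>K. ?P U\<close> xs by blast
      then show ?thesis by (rule eventually_mono) (use U in auto)
    qed
    then show ?thesis using that by blast
  qed
  show ?thesis unfolding istopology_def using 1 2 by blast
qed

lemma openin_seq: "openin (seq_topology S conv) U \<longleftrightarrow> U \<subseteq> S \<and>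
     (\<forall>x\<in>U. \<forall>s. (\<forall>n. s n \<in> S) \<longrightarrow> conv s x \<longrightarrow> eventually (\<lambda>n. s n \<in> U) sequentially)"
  unfolding seq_topology_def topology_inverse'[OF seq_istop] by (rule refl)

lemma topspace_seq: "topspace (seq_topology S conv) = S"
proof -
  have "openin (seq_topology S conv) S" by (simp add: openin_seq)
  moreover have "\<And>U. openin (seq_topology S conv) U \<Longrightarrow> U \<subseteq> S" by (simp add: openin_seq)
  ultimately show ?thesis unfolding topspace_def by blast
qed

lemma seq_cont:
  assumes "\<And>s x. (\<forall>n. s n \<in> S) \<Longrightarrow> x \<in> S \<Longrightarrow> conv s x \<Longrightarrow> (\<lambda>n. G (s n)) \<longlonglongrightarrow> G x"
  shows "continuous_map (seq_topology S conv) euclideanreal G"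
  unfolding continuous_map_def topspace_seq
proof (intro conjI allI impI)
  show "G \<in> S \<rightarrow> topspace euclideanreal" by simp
  fix U assume "openin euclideanreal U"
  then have oU: "open U" by simp
  show "openin (seq_topology S conv) {x \<in> S. G x \<in> U}"
    unfolding openin_seq
  proof (intro conjI ballI allI impI)
    fix x s assume x: "x \<in> {x \<in> S. G x \<in> U}" and s: "\<forall>n. s n \<in> S" "conv s x"
    have "eventually (\<lambda>n. G (s n) \<in> U) sequentially"
      using topological_tendstoD[OF assms[OF s(1) _ s(2)] oU] x by auto
    then show "eventually (\<lambda>n. s n \<in> {x \<in> S. G x \<in> U}) sequentially"
      by (rule eventually_mono) (use s in auto)
  qed auto
qed




definition tent :: "real \<Rightarrow> real \<Rightarrow> real \<Rightarrow> real" where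
  "tent a r z = max 0 (r - \<bar>z - a\<bar>)"

lemma tent_cont: "continuous_on UNIV (tent a r)"
  unfolding tent_def by (intro continuous_intros)

lemma tent_meas[measurable]: "tent a r \<in> borel_measurable borel"
  unfolding tent_def by measurable

lemma tent_nonneg: "tent a r z \<ge> 0" by (simp add: tent_def)

lemma tent_le: "tent a r z \<le> \<bar>r\<bar> * indicator (cball a \<bar>r\<bar>) z"
  by (auto simp: tent_def indicator_def dist_real_def abs_minus_commute)

lemma tent_le_r: "tent a r z \<le> \<bar>r\<bar>" by (simp add: tent_def)

lemma tent_zero: "\<bar>z - a\<bar> \<ge> r \<Longrightarrow> tent a r z = 0"
  by (simp add: tent_def)

lemma tent_tem_test: "tem_test (tent a r)"
proof -
  have bnd: "\<bar>tent a r x\<bar> / phi 1 x \<le> \<bar>r\<bar> * exp (\<bar>a\<bar> + \<bar>r\<bar>)" for x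
    proof (cases "\<bar>x - a\<bar> < r")
      case True
      then have "\<bar>x\<bar> \<le> \<bar>a\<bar> + \<bar>r\<bar>" by linarith
      then have e: "exp \<bar>x\<bar> \<le> exp (\<bar>a\<bar> + \<bar>r\<bar>)" by simp
      have "\<bar>tent a r x\<bar> / phi 1 x = tent a r x * exp \<bar>x\<bar>"
        by (simp add: phi_def tent_nonneg exp_minus field_simps)
      also have "\<dots> \<le> \<bar>r\<bar> * exp (\<bar>a\<bar> + \<bar>r\<bar>)"
        using e True by (intro mult_mono) (auto simp: tent_def)
      finally show ?thesis .
    next
      case False then show ?thesis by (simp add: tent_zero)
    qed
  have ev1: "eventually (\<lambda>x. tent a r x / phi 1 x = 0) at_top"
    using eventually_ge_at_top[of "\<bar>a\<bar> + \<bar>r\<bar>"]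
    by (rule eventually_mono) (auto simp: tent_def)
  have ev2: "eventually (\<lambda>x. tent a r x / phi 1 x = 0) at_bot"
    using eventually_le_at_bot[of "- \<bar>a\<bar> - \<bar>r\<bar>"]
    by (rule eventually_mono) (auto simp: tent_def)
  have "(1::real) > 0 \<and> (\<exists>C. \<forall>x. \<bar>tent a r x\<bar> / phi 1 x \<le> C) \<and>
     (\<exists>c. ((\<lambda>x. tent a r x / phi 1 x) \<longlongrightarrow> c) at_top) \<and>
     (\<exists>c. ((\<lambda>x. tent a r x / phi 1 x) \<longlongrightarrow> c) at_bot)"
  proof (intro conjI)
    show "\<exists>C. \<forall>x. \<bar>tent a r x\<bar> / phi 1 x \<le> C" using bnd by blast
    show "\<exists>c. ((\<lambda>x. tent a r x / phi 1 x) \<longlongrightarrow> c) at_top" using tendsto_eventually[OF ev1] by blast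
    show "\<exists>c. ((\<lambda>x. tent a r x / phi 1 x) \<longlongrightarrow> c) at_bot" using tendsto_eventually[OF ev2] by blast
  qed simp
  then show ?thesis unfolding tem_test_def using tent_cont by blast
qed

lemma tent_integrable:
  assumes "radon_measure \<mu>"
  shows "integrable \<mu> (tent a r)"
proof -
  have s: "sets \<mu> = sets borel" and fin: "emeasure \<mu> (cball a \<bar>r\<bar>) < \<infinity>"
    using assms by (auto simp: radon_measure_def)
  have "integrable \<mu> (\<lambda>z. \<bar>r\<bar> * indicator (cball a \<bar>r\<bar>) z)"
    using s fin by (intro integrable_mult_right integrable_real_indicator) auto
  moreover have "tent a r \<in> borel_measurable \<mu>"
    unfolding measurable_cong_sets[OF s refl] by (rule tent_meas)
  ultimately show ?thesis
    by (rule Bochner_Integration.integrable_bound) (auto simp: tent_le tent_nonneg intro!: AE_I2)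
qed

lemma topspace_X:
  assumes "X = tem_topology \<or> X = rap_topology"
  shows "topspace X \<subseteq> {\<mu>. radon_measure \<mu>}"
  using assms by (auto simp: tem_topology_def rap_topology_def topspace_seq Mtem_def Mrap_def)

lemma tent_int_cont:
  assumes "X = tem_topology \<or> X = rap_topology"
  shows "continuous_map X euclideanreal (\<lambda>\<mu>. \<integral>z. tent a r z \<partial>\<mu>)"
  using assms
proof
  assume X: "X = tem_topology"
  show ?thesis unfolding X tem_topology_def
    by (rule seq_cont) (use tent_tem_test in \<open>auto simp: tem_conv_def\<close>)
next
  assume X: "X = rap_topology"
  have b: "bounded (range (tent a r))"
  proof -
    have "range (tent a r) \<subseteq> cball 0 \<bar>r\<bar>"
      using tent_le_r tent_nonneg by (auto simp: dist_real_def)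
    then show ?thesis using bounded_cball bounded_subset by blast
  qed
  show ?thesis unfolding X rap_topology_def
    by (rule seq_cont) (use tent_cont b in \<open>auto simp: rap_conv_def weak_conv_meas_def\<close>)
qed




lemma rat_between: "(x::real) < y \<Longrightarrow> \<exists>q::rat. x < real_of_rat q \<and> real_of_rat q < y"
  using Rats_dense_in_real by (metis Rats_cases)

lemma supp_null:
  assumes s: "sets \<mu> = sets borel" and U: "open U" and d: "U \<inter> supp \<mu> = {}"
  shows "emeasure \<mu> U = 0"
proof -
  define B where "B q = ball (real_of_rat (fst q)) (real_of_rat (snd q))" for q :: "rat \<times> rat"
  define N where "N q = (if emeasure \<mu> (B q) = 0 then B q else {})" for q :: "rat \<times> rat"
  have Nn: "(\<Union>q\<in>UNIV. N q) \<in> null_sets \<mu>"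
    by (rule null_sets_UN') (auto simp: N_def B_def s null_sets_def)
  have "U \<subseteq> (\<Union>q\<in>UNIV. N q)"
  proof
    fix x assume "x \<in> U"
    then have "x \<notin> supp \<mu>" using d by auto
    then obtain e where e: "e > 0" "emeasure \<mu> (ball x e) = 0"
      unfolding supp_def by (auto simp: not_less)
    obtain p1 where p1: "x - e/3 < real_of_rat p1" "real_of_rat p1 < x"
      using rat_between[of "x - e/3" x] e by auto
    obtain p2 where p2: "e/3 < real_of_rat p2" "real_of_rat p2 < 2*e/3"
      using rat_between[of "e/3" "2*e/3"] e by auto
    have sub: "B (p1,p2) \<subseteq> ball x e"
      using p1 p2 by (auto simp: B_def dist_real_def)
    have "emeasure \<mu> (B (p1,p2)) \<le> emeasure \<mu> (ball x e)"
      by (rule emeasure_mono[OF sub]) (simp add: s)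
    then have "N (p1,p2) = B (p1, p2)" using e by (simp add: N_def)
    moreover have "x \<in> B (p1,p2)" using p1 p2 by (auto simp: B_def dist_real_def)
    ultimately show "x \<in> (\<Union>q\<in>UNIV. N q)" by blast
  qed
  then have "emeasure \<mu> U \<le> emeasure \<mu> (\<Union>q\<in>UNIV. N q)"
    using Nn by (intro emeasure_mono) auto
  then show ?thesis using Nn by (metis le_zero_eq null_setsD1)
qed

lemma supp_pos_int:
  assumes s: "sets \<mu> = sets borel" and f: "continuous_on UNIV f"
    and i: "(\<integral>z. f z \<partial>\<mu>) \<noteq> (0::real)"
  shows "\<exists>z\<in>supp \<mu>. f z \<noteq> 0"
proof (rule ccontr)
  assume "\<not> ?thesis"
  then have "{z. f z \<noteq> 0} \<inter> supp \<mu> = {}" by auto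
  moreover have "open {z. f z \<noteq> 0}" using open_Collect_neq[OF f, of "\<lambda>_. 0"] by simp
  ultimately have "emeasure \<mu> {z. f z \<noteq> 0} = 0" using supp_null[OF s] by blast
  moreover have "{z. f z \<noteq> 0} \<in> sets \<mu>"
    using \<open>open {z. f z \<noteq> 0}\<close> by (simp add: s)
  ultimately have "AE z in \<mu>. f z = 0"
    by (intro AE_I'[of "{z. f z \<noteq> 0}"]) (auto simp: null_sets_def)
  then have "(\<integral>z. f z \<partial>\<mu>) = 0" by (rule integral_eq_zero_AE)
  with i show False by simp
qed

lemma tent_int_pos:
  assumes R: "radon_measure \<mu>" and x: "x \<in> supp \<mu>" and t: "tent a r x > 0"
  shows "(\<integral>z. tent a r z \<partial>\<mu>) > 0"
proof -
  have s: "sets \<mu> = sets borel" using R by (simp add: radon_measure_def)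
  define c where "c = tent a r x / 2"
  have c: "c > 0" using t by (simp add: c_def)
  have tx: "tent a r x = r - \<bar>x - a\<bar>" using t by (simp add: tent_def)
  have le: "c * indicator (ball x c) z \<le> tent a r z" for z
  proof (cases "z \<in> ball x c")
    case True
    then have "\<bar>z - a\<bar> \<le> \<bar>x - a\<bar> + c" by (auto simp: dist_real_def)
    moreover have "\<bar>x - a\<bar> < r" using t by (simp add: tent_def)
    moreover have "c = (r - \<bar>x - a\<bar>)/2" using tx by (simp add: c_def)
    moreover have "tent a r z \<ge> r - \<bar>z - a\<bar>" by (simp add: tent_def)
    ultimately show ?thesis using True by (simp; linarith)
  qed (simp add: tent_nonneg)
  have fin: "emeasure \<mu> (ball x c) < \<infinity>"
  proof -
    have "emeasure \<mu> (ball x c) \<le> emeasure \<mu> (cball x c)"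
      by (rule emeasure_mono) (auto simp: s)
    also have "\<dots> < \<infinity>" using R by (simp add: radon_measure_def)
    finally show ?thesis .
  qed
  have pos: "emeasure \<mu> (ball x c) > 0" using x c by (simp add: supp_def)
  have ii: "integrable \<mu> (\<lambda>z. c * indicator (ball x c) z)"
    using fin by (intro integrable_mult_right integrable_real_indicator) (auto simp: s)
  have "(\<integral>z. c * indicator (ball x c) z \<partial>\<mu>) = c * measure \<mu> (ball x c)"
    using s by (simp add: sets_eq_imp_space_eq)
  also have "\<dots> > 0" using c pos fin
    by (simp add: measure_def enn2real_positive_iff)
  also have "(\<integral>z. c * indicator (ball x c) z \<partial>\<mu>) \<le> (\<integral>z. tent a r z \<partial>\<mu>)"
    by (rule integral_mono[OF ii tent_integrable[OF R] le])
  finally show ?thesis .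
qed




definition clip :: "real \<Rightarrow> real" where "clip x = min 1 (max 0 x)"

definition kq :: "rat \<times> rat \<Rightarrow> real measure \<times> real measure \<Rightarrow> real" where
  "kq q p = clip (\<integral>z. tent (real_of_rat (fst q)) ((real_of_rat (fst q) - real_of_rat (snd q))/3) z \<partial>(fst p))
          * clip (\<integral>z. tent (real_of_rat (snd q)) ((real_of_rat (fst q) - real_of_rat (snd q))/3) z \<partial>(snd p))"

lemma clip_cont: "continuous_map X euclideanreal f \<Longrightarrow> continuous_map X euclideanreal (\<lambda>x. clip (f x))"
  unfolding clip_def by (intro continuous_intros)

lemma kq_bounds: "0 \<le> kq q p" "kq q p \<le> 1"
  unfolding kq_def clip_def by (auto intro: mult_le_one)

lemma kq_cont:
  assumes "X = tem_topology \<or> X = rap_topology"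
  shows "continuous_map (prod_topology X X) euclideanreal (kq q)"
proof -
  have 1: "continuous_map (prod_topology X X) euclideanreal (\<lambda>p. \<integral>z. tent a r z \<partial>(fst p))" for a r
    using continuous_map_compose[OF continuous_map_fst tent_int_cont[OF assms]] by (simp add: o_def)
  have 2: "continuous_map (prod_topology X X) euclideanreal (\<lambda>p. \<integral>z. tent a r z \<partial>(snd p))" for a r
    using continuous_map_compose[OF continuous_map_snd tent_int_cont[OF assms]] by (simp add: o_def)
  show ?thesis unfolding kq_def
    by (intro continuous_map_real_mult clip_cont 1 2)
qed

lemma clip_nz: "clip x \<noteq> 0 \<Longrightarrow> x \<noteq> 0" by (auto simp: clip_def)
lemma clip_pos: "x > 0 \<Longrightarrow> clip x > 0" by (auto simp: clip_def)

lemma tent_nz: "tent a r z \<noteq> 0 \<Longrightarrow> \<bar>z - a\<bar> < r" by (auto simp: tent_def)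

lemma kq_good:
  assumes R1: "radon_measure \<mu>" and R2: "radon_measure \<nu>" and g: "Rsupp \<mu> \<le> Lsupp \<nu>"
  shows "kq q (\<mu>, \<nu>) = 0"
proof (rule ccontr)
  define a where "a = real_of_rat (fst q)"
  define b where "b = real_of_rat (snd q)"
  define r where "r = (a - b)/3"
  assume "kq q (\<mu>, \<nu>) \<noteq> 0"
  then have i1: "(\<integral>z. tent a r z \<partial>\<mu>) \<noteq> 0" and i2: "(\<integral>z. tent b r z \<partial>\<nu>) \<noteq> 0"
    unfolding kq_def a_def b_def r_def using clip_nz by auto
  obtain z where z: "z \<in> supp \<mu>" "tent a r z \<noteq> 0"
    using supp_pos_int[OF _ tent_cont i1] R1 by (auto simp: radon_measure_def)
  obtain z' where z': "z' \<in> supp \<nu>" "tent b r z' \<noteq> 0"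
    using supp_pos_int[OF _ tent_cont i2] R2 by (auto simp: radon_measure_def)
  have "\<bar>z - a\<bar> < r" "\<bar>z' - b\<bar> < r" using z z' tent_nz by auto
  then have "z' < z" unfolding r_def by (simp add: field_simps) (simp add: abs_if split: if_splits)
  moreover have "ereal z \<le> Rsupp \<mu>" unfolding Rsupp_def using z by (auto intro: Sup_upper)
  moreover have "Lsupp \<nu> \<le> ereal z'" unfolding Lsupp_def using z' by (auto intro: Inf_lower)
  ultimately show False using g by (metis ereal_less_eq(3) order_trans not_le)
qed

lemma kq_bad:
  assumes R1: "radon_measure \<mu>" and R2: "radon_measure \<nu>" and g: "\<not> Rsupp \<mu> \<le> Lsupp \<nu>"
  shows "\<exists>q. kq q (\<mu>, \<nu>) > 0"
proof -
  have "Lsupp \<nu> < Rsupp \<mu>" using g by simp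
  then obtain x where x: "x \<in> supp \<mu>" "Lsupp \<nu> < ereal x"
    unfolding Rsupp_def by (auto simp: less_Sup_iff)
  then obtain y where y: "y \<in> supp \<nu>" "ereal y < ereal x"
    unfolding Lsupp_def by (auto simp: Inf_less_iff)
  define d where "d = x - y"
  have d: "d > 0" using y by (simp add: d_def)
  obtain p1 where p1: "x - d/6 < real_of_rat p1" "real_of_rat p1 < x"
    using rat_between[of "x - d/6" x] d by auto
  obtain p2 where p2: "y < real_of_rat p2" "real_of_rat p2 < y + d/6"
    using rat_between[of y "y + d/6"] d by auto
  define a where "a = real_of_rat p1"
  define b where "b = real_of_rat p2"
  define r where "r = (a - b)/3"
  have e1: "\<bar>x - a\<bar> = x - a" "\<bar>y - b\<bar> = b - y" using p1 p2 by (auto simp: a_def b_def)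
  have "r > x - a" using p1 p2 unfolding r_def a_def b_def d_def by (simp add: field_simps)
  moreover have "r > b - y" using p1 p2 unfolding r_def a_def b_def d_def by (simp add: field_simps)
  ultimately have t1: "tent a r x > 0" and t2: "tent b r y > 0" using e1 by (auto simp: tent_def)
  have "(\<integral>z. tent a r z \<partial>\<mu>) > 0" by (rule tent_int_pos[OF R1 x(1) t1])
  moreover have "(\<integral>z. tent b r z \<partial>\<nu>) > 0" by (rule tent_int_pos[OF R2 y(1) t2])
  ultimately have "kq (p1, p2) (\<mu>, \<nu>) > 0"
    unfolding kq_def a_def b_def r_def by (simp add: clip_pos)
  then show ?thesis by blast
qed

lemma cont_meas:
  assumes "continuous_map T euclideanreal f"
  shows "f \<in> borel_measurable (borel_of T)"
proof (rule borel_measurableI)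
  fix S :: "real set" assume "open S"
  have sp: "space (borel_of T) = topspace T"
    unfolding borel_of_def by (rule space_measure_of) (auto dest: openin_subset)
  have st: "sets (borel_of T) = sigma_sets (topspace T) {U. openin T U}"
    unfolding borel_of_def by (rule sets_measure_of) (auto dest: openin_subset)
  have "openin T {x \<in> topspace T. f x \<in> S}"
    using openin_continuous_map_preimage[OF assms] \<open>open S\<close> by simp
  moreover have "f -` S \<inter> space (borel_of T) = {x \<in> topspace T. f x \<in> S}"
    using sp by auto
  ultimately show "f -` S \<inter> space (borel_of T) \<in> sets (borel_of T)"
    unfolding st by auto
qed




lemma exp_int: "integrable lborel (\<lambda>t::real. indicator {0..} t *\<^sub>R exp (- t))"
proof -
  have "(\<lambda>x::real. exp (- 1 * x)) integrable_on {0..}"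
    by (rule integrable_on_exp_minus_to_infinity) simp
  then have "(\<lambda>x::real. exp (- x)) absolutely_integrable_on {0..}"
    by (intro nonnegative_absolutely_integrable_1) auto
  then have "integrable lebesgue (\<lambda>t::real. indicator {0..} t *\<^sub>R exp (- t))"
    by (simp add: set_integrable_def)
  then show ?thesis by (subst (asm) integrable_completion) auto
qed

lemma rc_meas:
  fixes g :: "real \<Rightarrow> real"
  assumes rc: "\<And>t. (g \<longlongrightarrow> g t) (at_right t)"
  shows "g \<in> borel_measurable borel"
proof (rule borel_measurable_LIMSEQ_real)
  define a where "a n t = (real_of_int \<lfloor>t * 2^n\<rfloor> + 1) / 2^n" for n :: nat and t :: real
  show "(\<lambda>n. g (a n t)) \<longlonglongrightarrow> g t" for t
  proof -
    have lo: "t < a n t" for n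
    proof -
      have "t * 2^n < real_of_int \<lfloor>t * 2^n\<rfloor> + 1" by linarith
      then show ?thesis by (simp add: a_def field_simps)
    qed
    have hi: "a n t \<le> t + (1/2)^n" for n
    proof -
      have "real_of_int \<lfloor>t * 2^n\<rfloor> \<le> t * 2^n" by linarith
      then show ?thesis by (simp add: a_def field_simps power_divide)
    qed
    have "(\<lambda>n. t + (1/2::real)^n) \<longlonglongrightarrow> t + 0"
      by (intro tendsto_add tendsto_const LIMSEQ_power_zero) auto
    then have l: "(\<lambda>n. t + (1/2::real)^n) \<longlonglongrightarrow> t" by simp
    have "(\<lambda>n. a n t) \<longlonglongrightarrow> t"
      by (rule tendsto_sandwich[OF always_eventually always_eventually tendsto_const l])
         (use lo hi less_imp_le in blast)+
    then have "filterlim (\<lambda>n. a n t) (at_right t) sequentially"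
      using lo by (intro tendsto_imp_filterlim_at_right) auto
    from filterlim_compose[OF rc this] show ?thesis .
  qed
  show "(\<lambda>t. g (a n t)) \<in> borel_measurable borel" for n
  proof -
    have f: "(\<lambda>t::real. \<lfloor>t * 2^n\<rfloor>) \<in> borel \<rightarrow>\<^sub>M count_space UNIV" by measurable
    have "(\<lambda>t::real. (\<lambda>m::int. \<lambda>t::real. g ((real_of_int m + 1) / 2^n)) (\<lfloor>t * 2^n\<rfloor>) t) \<in> borel_measurable borel"
      by (rule measurable_compose_countable[OF _ f]) simp
    then show ?thesis by (simp add: a_def)
  qed
qed

definition Gq :: "rat \<times> rat \<Rightarrow> (real \<Rightarrow> real measure \<times> real measure) \<Rightarrow> real" where
  "Gq q w = (LINT t:{0..}|lborel. exp (- t) * kq q (w t))"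

lemma G_cont:
  assumes X: "X = tem_topology \<or> X = rap_topology"
  shows "continuous_map (MZ_topology (prod_topology X X)) euclideanreal (Gq q)"
  unfolding MZ_topology_def
proof (rule seq_cont)
  fix s x assume conv: "pseudo_path_conv (prod_topology X X) s x"
  have cont: "continuous_map (prod_topology (top_of_set {0..}) (prod_topology X X)) euclideanreal
      (\<lambda>p. kq q (snd p))"
    using continuous_map_compose[OF continuous_map_snd kq_cont[OF X]] by (simp add: o_def)
  have bnd: "\<exists>C. \<forall>p\<in>topspace (prod_topology (top_of_set {0..}) (prod_topology X X)). \<bar>kq q (snd p)\<bar> \<le> C"
    using kq_bounds by (intro exI[of _ 1]) auto
  have H: "\<forall>f. continuous_map (prod_topology (top_of_set {0..}) (prod_topology X X)) euclideanreal f \<longrightarrow>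
          (\<exists>C. \<forall>p\<in>topspace (prod_topology (top_of_set {0..}) (prod_topology X X)). \<bar>f p\<bar> \<le> C) \<longrightarrow>
          (\<lambda>n. LINT t:{0..}|lborel. exp (- t) * f (t, s n t))
            \<longlonglongrightarrow> (LINT t:{0..}|lborel. exp (- t) * f (t, x t))"
    using conv unfolding pseudo_path_conv_def .
  from H[rule_format, OF cont bnd] show "(\<lambda>n. Gq q (s n)) \<longlonglongrightarrow> Gq q x"
    by (simp add: Gq_def)
qed

lemma G_bound: "\<bar>Gq q w\<bar> \<le> (LINT t:{0..}|lborel. exp (- t))"
proof -
  have "Gq q w \<ge> 0" unfolding Gq_def set_lebesgue_integral_def
    by (intro Bochner_Integration.integral_nonneg) (auto simp: kq_bounds indicator_def)
  moreover have "Gq q w \<le> (LINT t:{0..}|lborel. exp (- t))"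
    unfolding Gq_def set_lebesgue_integral_def
    by (rule integral_mono'[OF exp_int]) (auto simp: kq_bounds indicator_def mult_le_one)
  ultimately show ?thesis by simp
qed




lemma cadlag_in:
  assumes X: "X = tem_topology \<or> X = rap_topology"
    and w: "w \<in> cadlag_paths (prod_topology X X)" and t: "t \<ge> 0"
  shows "radon_measure (fst (w t))" "radon_measure (snd (w t))"
proof -
  have "w t \<in> topspace X \<times> topspace X" using w t by (auto simp: cadlag_paths_def)
  then show "radon_measure (fst (w t))" "radon_measure (snd (w t))"
    using topspace_X[OF X] by auto
qed

lemma kq_rc:
  assumes X: "X = tem_topology \<or> X = rap_topology"
    and w: "w \<in> cadlag_paths (prod_topology X X)"
  shows "((\<lambda>s. kq q (w s)) \<longlongrightarrow> kq q (w t)) (at_right t)"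
proof (cases "t \<ge> 0")
  case True
  then have "limitin (prod_topology X X) w (w t) (at_right t)"
    using w by (auto simp: cadlag_paths_def)
  from continuous_map_limit[OF kq_cont[OF X] this]
  show ?thesis by (simp add: o_def)
next
  case False
  have "eventually (\<lambda>s. kq q (w s) = kq q (w t)) (at_right t)"
    unfolding eventually_at_right_field
    using False w by (intro exI[of _ 0]) (auto simp: cadlag_paths_def)
  then show ?thesis by (rule tendsto_eventually)
qed

lemma kq_w_meas:
  assumes X: "X = tem_topology \<or> X = rap_topology"
    and w: "w \<in> cadlag_paths (prod_topology X X)"
  shows "(\<lambda>s. kq q (w s)) \<in> borel_measurable borel"
  by (rule rc_meas) (rule kq_rc[OF X w])

lemma G_nonneg: "Gq q w \<ge> 0"
  unfolding Gq_def set_lebesgue_integral_def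
  by (intro Bochner_Integration.integral_nonneg) (auto simp: kq_bounds indicator_def)

lemma G_zero_imp:
  assumes X: "X = tem_topology \<or> X = rap_topology"
    and w: "w \<in> cadlag_paths (prod_topology X X)" and G: "Gq q w = 0" and t0: "t0 \<ge> 0"
  shows "kq q (w t0) = 0"
proof (rule ccontr)
  assume nz: "kq q (w t0) \<noteq> 0"
  then have c: "kq q (w t0) > 0" using kq_bounds[of q "w t0"] by simp
  define h where "h t = indicator {0..} t *\<^sub>R (exp (- t) * kq q (w t))" for t :: real
  have hm: "h \<in> borel_measurable lborel"
    unfolding h_def using kq_w_meas[OF X w, of q] by measurable
  have hi: "integrable lborel h"
    using exp_int hm
    by (rule Bochner_Integration.integrable_bound)
       (auto intro!: AE_I2 simp: h_def indicator_def kq_bounds mult_le_one)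
  have "integral\<^sup>L lborel h = 0" using G unfolding Gq_def set_lebesgue_integral_def h_def by simp
  then have ae: "AE t in lborel. h t = 0"
    using integral_nonneg_eq_0_iff_AE[OF hi] by (auto simp: h_def kq_bounds indicator_def)
  have "eventually (\<lambda>s. kq q (w s) > 0) (at_right t0)"
    using order_tendstoD(1)[OF kq_rc[OF X w] c] .
  then obtain b where b: "b > t0" "\<And>y. y > t0 \<Longrightarrow> y < b \<Longrightarrow> kq q (w y) > 0"
    unfolding eventually_at_right_field by auto
  from ae obtain N where N: "{t \<in> space lborel. \<not> h t = 0} \<subseteq> N" "emeasure lborel N = 0" "N \<in> sets lborel"
    by (rule AE_E)
  have "{t0<..<b} \<subseteq> N"
  proof
    fix y assume "y \<in> {t0<..<b}"
    then have "h y > 0" using b t0 by (auto simp: h_def)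
    then show "y \<in> N" using N(1) by auto
  qed
  then have "emeasure lborel {t0<..<b} \<le> emeasure lborel N" by (rule emeasure_mono) (use N in auto)
  then show False using N b by simp
qed

lemma good_G:
  assumes X: "X = tem_topology \<or> X = rap_topology"
    and w: "w \<in> cadlag_paths (prod_topology X X)"
    and g: "\<forall>t>0. Rsupp (fst (w t)) \<le> Lsupp (snd (w t))"
  shows "Gq q w = 0"
proof -
  have "AE t in lborel. indicator {0..} t *\<^sub>R (exp (- t) * kq q (w t)) = 0"
    using AE_lborel_singleton[of 0]
  proof eventually_elim
    case (elim t)
    show ?case
    proof (cases "t > 0")
      case True
      have r1: "radon_measure (fst (w t))" and r2: "radon_measure (snd (w t))"
        using cadlag_in[OF X w, of t] True by auto
      have "kq q (fst (w t), snd (w t)) = 0"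
        by (rule kq_good[OF r1 r2]) (use g True in auto)
      then show ?thesis by simp
    qed (use elim in auto)
  qed
  then show ?thesis unfolding Gq_def set_lebesgue_integral_def by (rule integral_eq_zero_AE)
qed




theorem lemma5p3:
  fixes X :: "real measure topology"
    and Ps :: "nat \<Rightarrow> (real \<Rightarrow> real measure \<times> real measure) measure"
    and P :: "(real \<Rightarrow> real measure \<times> real measure) measure"
  assumes "X = tem_topology \<or> X = rap_topology"
    and "\<And>n. prob_space (Ps n)"
    and "\<And>n. sets (Ps n) = sets (borel_of (MZ_topology (prod_topology X X)))"
    and "\<And>n. space (Ps n) = topspace (MZ_topology (prod_topology X X))"
    and "prob_space P"
    and "sets P = sets (borel_of (MZ_topology (prod_topology X X)))"
    and "space P = topspace (MZ_topology (prod_topology X X))"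
    and "weak_conv_laws (MZ_topology (prod_topology X X)) Ps P"
    and "\<And>n. AE w in Ps n. \<forall>t>0. Rsupp (fst (w t)) \<le> Lsupp (snd (w t))"
  shows "AE w in P. \<forall>t>0. Rsupp (fst (w t)) \<le> Lsupp (snd (w t))"
proof -
  note X = assms(1)
  define MZ where "MZ = MZ_topology (prod_topology X X)"
  have tsp: "topspace MZ = cadlag_paths (prod_topology X X)"
    unfolding MZ_def MZ_topology_def by (rule topspace_seq)
  interpret P: prob_space P by (rule assms(5))
  have AEq: "AE w in P. Gq q w = 0" for q
  proof -
    have meas: "Gq q \<in> borel_measurable (borel_of MZ)"
      unfolding MZ_def by (rule cont_meas[OF G_cont[OF X]])
    have measP: "Gq q \<in> borel_measurable P"
      using meas unfolding measurable_cong_sets[OF assms(6) refl] MZ_def .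
    have zero: "(\<integral>w. Gq q w \<partial>Ps n) = 0" for n
    proof -
      have "AE w in Ps n. Gq q w = 0"
        using assms(9)[of n] AE_space
      proof eventually_elim
        case (elim w)
        then have "w \<in> cadlag_paths (prod_topology X X)"
          using assms(4) tsp by (simp add: MZ_def)
        then show ?case using good_G[OF X _ elim(1)] by blast
      qed
      then show ?thesis by (rule integral_eq_zero_AE)
    qed
    have bnd: "\<exists>C. \<forall>x\<in>topspace MZ. \<bar>Gq q x\<bar> \<le> C"
      using G_bound by blast
    have "(\<lambda>n. \<integral>w. Gq q w \<partial>Ps n) \<longlonglongrightarrow> (\<integral>w. Gq q w \<partial>P)"
      using assms(8) G_cont[OF X] bnd unfolding weak_conv_laws_def MZ_def by blast
    then have "(\<integral>w. Gq q w \<partial>P) = 0"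
      using zero by (simp add: LIMSEQ_const_iff)
    moreover have "integrable P (Gq q)"
      using G_bound measP by (intro P.integrable_const_bound[where B="LINT t:{0..}|lborel. exp (- t)"]) auto
    ultimately show ?thesis
      using integral_nonneg_eq_0_iff_AE[of P "Gq q"] G_nonneg by auto
  qed
  then have "AE w in P. \<forall>q. Gq q w = 0" by (simp add: AE_all_countable)
  then show ?thesis using AE_space
  proof eventually_elim
    case (elim w)
    then have w: "w \<in> cadlag_paths (prod_topology X X)"
      using assms(7) tsp by (simp add: MZ_def)
    show ?case
    proof (intro allI impI)
      fix t :: real assume t: "t > 0"
      have r1: "radon_measure (fst (w t))" and r2: "radon_measure (snd (w t))"
        using cadlag_in[OF X w, of t] t by auto
      show "Rsupp (fst (w t)) \<le> Lsupp (snd (w t))"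
      proof (rule ccontr)
        assume "\<not> ?thesis"
        from kq_bad[OF r1 r2 this] obtain q where "kq q (fst (w t), snd (w t)) > 0" by blast
        moreover have "kq q (w t) = 0"
          using G_zero_imp[OF X w _, of q t] elim(1) t by auto
        ultimately show False by simp
      qed
    qed
  qed
qed


end
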